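(* Let $N\ge 2$ and let $\mathcal{A}$ be an $M\times N$ circular Florentine rectangle over $\mathbb{Z}_N$ with rows $\pi_0,\dots,\pi_{M-1}$ (each a permutation of $\mathbb{Z}_N$). Then for all $0\le i\neq r\le M-1$ and every $l'\in\mathbb{Z}_N$, the equation $\pi_i(t)=\pi_r(t+l')$ (with $t+l'$ taken modulo $N$) has exactly one solution $t\in\mathbb{Z}_N$.
   Context: An $M\times N$ circular Florentine rectangle (CFR) over $\mathbb{Z}_N$ is an $M\times N$ array whose rows, viewed as maps $\pi_i:\mathbb{Z}_N\to\mathbb{Z}_N$ ($\pi_i(x)$ is the entry in row $i$, column $x$), are permutations of $\mathbb{Z}_N$, and such that for every $m\in\mathbb{Z}_N\setminus\{0\}$ and all $0\le i,j\le M-1$, $x,y\in\mathbb{Z}_N$, one has $(\pi_i(x),\pi_i(x+m))=(\pi_j(y),\pi_j(y+m))$ (indices modulo $N$) if and only if $i=j$ and $x=y$. *)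

theory Defs
  imports Main
begin

text \<open>Z_N is represented by {0..<N} with addition modulo N.
  A rectangle with M rows is a family pi :: nat => nat => nat; row i (for i < M)
  is the map pi i restricted to {0..<N}.\<close>

definition circular_florentine_rectangle :: "nat \<Rightarrow> nat \<Rightarrow> (nat \<Rightarrow> nat \<Rightarrow> nat) \<Rightarrow> bool" where
  "circular_florentine_rectangle M N pi \<longleftrightarrow>
     (\<forall>i<M. bij_betw (pi i) {0..<N} {0..<N}) \<and>
     (\<forall>m\<in>{1..<N}. \<forall>i<M. \<forall>j<M. \<forall>x<N. \<forall>y<N.
        ((pi i x, pi i ((x + m) mod N)) = (pi j y, pi j ((y + m) mod N))
          \<longleftrightarrow> (i = j \<and> x = y)))"

end

theory Submission
  imports Defs
begin

lemma uniq_aux: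
  fixes M N :: nat and pi :: "nat \<Rightarrow> nat \<Rightarrow> nat"
  assumes cfr: "circular_florentine_rectangle M N pi"
    and "i < M" and "r < M" and "i \<noteq> r"
    and t1: "t1 < t2" "t2 < N"
    and s1: "pi i t1 = pi r ((t1 + l) mod N)"
    and s2: "pi i t2 = pi r ((t2 + l) mod N)"
  shows False
proof -
  define m where "m = t2 - t1"
  have m: "m \<in> {1..<N}" using t1 unfolding m_def by auto
  have tm: "(t1 + m) mod N = t2" using t1 unfolding m_def by auto
  have y: "((t1 + l) mod N + m) mod N = (t2 + l) mod N"
  proof -
    have "((t1 + l) mod N + m) mod N = (t1 + l + m) mod N" by (simp add: mod_add_left_eq)
    also have "t1 + l + m = t2 + l" using t1 unfolding m_def by simp
    finally show ?thesis .
  qed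
  have yN: "(t1 + l) mod N < N" using t1 by auto
  have "(pi i t1, pi i ((t1 + m) mod N)) = (pi r ((t1 + l) mod N), pi r (((t1 + l) mod N + m) mod N))"
    using tm y s1 s2 by simp
  then have "i = r" using cfr m assms(2,3) t1 yN
    unfolding circular_florentine_rectangle_def by (meson order.strict_trans)
  then show False using assms(4) by simp
qed

theorem lemma3:
  fixes M N :: nat and pi :: "nat \<Rightarrow> nat \<Rightarrow> nat"
  assumes "N \<ge> 2"
    and "circular_florentine_rectangle M N pi"
    and "i < M" and "r < M" and "i \<noteq> r"
    and "l < N"
  shows "\<exists>!t. t < N \<and> pi i t = pi r ((t + l) mod N)"
proof -
  have bi: "bij_betw (pi i) {0..<N} {0..<N}" and br: "bij_betw (pi r) {0..<N} {0..<N}"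
    using assms(2,3,4) unfolding circular_florentine_rectangle_def by auto
  define g where "g = inv_into {0..<N} (pi r)"
  define f where "f t = (g (pi i t) + N - t) mod N" for t
  have gprop: "g (pi i t) < N \<and> pi r (g (pi i t)) = pi i t" if "t < N" for t
  proof -
    have "pi i t \<in> {0..<N}" using bi that bij_betwE by fastforce
    then show ?thesis unfolding g_def using br
      by (metis bij_betw_imp_surj_on bij_betw_inv_into bij_betwE f_inv_into_f atLeastLessThan_iff)
  qed
  have key: "(pi i t = pi r ((t + l') mod N)) \<longleftrightarrow> f t = l'" if "t < N" "l' < N" for t l'
  proof -
    have gs: "g (pi i t) < N" "pi r (g (pi i t)) = pi i t" using gprop that by auto
    have "(pi i t = pi r ((t + l') mod N)) \<longleftrightarrow> (t + l') mod N = g (pi i t)"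
    proof
      assume "pi i t = pi r ((t + l') mod N)"
      then have "pi r ((t + l') mod N) = pi r (g (pi i t))" using gs by simp
      moreover have "(t + l') mod N < N" using that by auto
      ultimately show "(t + l') mod N = g (pi i t)"
        using br gs unfolding bij_betw_def inj_on_def by auto
    next
      assume "(t + l') mod N = g (pi i t)" then show "pi i t = pi r ((t + l') mod N)" using gs by simp
    qed
    also have "\<dots> \<longleftrightarrow> f t = l'"
    proof
      assume h: "(t + l') mod N = g (pi i t)"
      have "f t = ((t + l') mod N + N - t) mod N" unfolding f_def h ..
      also have "\<dots> = l'"
      proof (cases "t + l' < N")
        case True then show ?thesis using that by simp
      next
        case False
        then have "(t + l') mod N = t + l' - N" using that by (simp add: le_mod_geq)
        then show ?thesis using that False by simp
      qed
      finally show "f t = l'" .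
    next
      assume h: "f t = l'"
      have "(t + l') mod N = (t + (g (pi i t) + N - t) mod N) mod N" using h f_def by simp
      also have "\<dots> = (t + (g (pi i t) + N - t)) mod N" by (simp add: mod_add_right_eq)
      also have "\<dots> = (g (pi i t) + N) mod N" using that by simp
      also have "\<dots> = g (pi i t)" using gs by simp
      finally show "(t + l') mod N = g (pi i t)" .
    qed
    finally show ?thesis .
  qed
  have fN: "f t < N" for t unfolding f_def using assms(1) by simp
  have inj: "inj_on f {0..<N}"
  proof (rule inj_onI)
    fix a b assume a: "a \<in> {0..<N}" and b: "b \<in> {0..<N}" and e: "f a = f b"
    show "a = b"
    proof (rule ccontr)
      assume "a \<noteq> b"
      then consider "a < b" | "b < a" by linarith
      then show False
      proof cases
        case 1
        then show False using uniq_aux[OF assms(2,3,4,5) 1, of "f a"] key[of a "f a"] key[of b "f a"] a b e fN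
          by auto
      next
        case 2
        then show False using uniq_aux[OF assms(2,3,4,5) 2, of "f a"] key[of a "f a"] key[of b "f a"] a b e fN
          by auto
      qed
    qed
  qed
  have "f ` {0..<N} = {0..<N}"
    by (rule card_subset_eq) (use inj fN in \<open>auto simp: card_image\<close>)
  then obtain t where t: "t < N" "f t = l" using assms(6) by (metis atLeastLessThan_iff imageE zero_le)
  show ?thesis
  proof (rule ex1I[of _ t])
    show "t < N \<and> pi i t = pi r ((t + l) mod N)" using key[OF t(1) assms(6)] t by simp
  next
    fix y assume y: "y < N \<and> pi i y = pi r ((y + l) mod N)"
    then have "f y = l" using key assms(6) by blast
    then show "y = t" using inj t y unfolding inj_on_def by auto
  qed
qed

end
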